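(* Fix $p\in(\tfrac12,1)$ and let $\{B_n\}_{n\ge1}$ be a sequence with $B_n\in\{1,\dots,n\}$ and $\lim_{n\to\infty}B_n/n=q$ for some $q\in[0,1]$. Let $\sigma^n$ be the unique symmetric non-trivial Bayes-Nash equilibrium of $\Gamma(B_n,n)$, and let $x_n=\Pr_{\sigma^n}(\sum_{i=1}^n a_i\ge B_n\mid\omega=H,a_1=1)$ and $y_n=\Pr_{\sigma^n}(\sum_{i=1}^n a_i\ge B_n\mid\omega=L,a_1=1)$. Then $$\lim_{n\to\infty}\Big(x_n-\Pr_{\sigma^n}\big(\textstyle\sum_{i=1}^n a_i\ge B_n\mid\omega=H\big)\Big)=0\quad\text{and}\quad\lim_{n\to\infty}\Big(y_n-\Pr_{\sigma^n}\big(\textstyle\sum_{i=1}^n a_i\ge B_n\mid\omega=L\big)\Big)=0.$$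
   Context: The crowdfunding game $\Gamma(B,n)$ with parameter $p\in(\tfrac12,1)$: there are $n$ players and a threshold $B\in\{1,\dots,n\}$. A state $\omega\in\{H,L\}$ is drawn with probability $\tfrac12$ each. Conditional on $\omega$, each player $i$ independently receives a signal $s_i\in\{H,L\}$ with $\Pr(s_i=\omega\mid\omega)=p$. Players simultaneously choose $a_i\in\{0,1\}$. Player $i$'s payoff is $1$ if $a_i=1$, $\sum_j a_j\ge B$ and $\omega=H$; $-1$ if $a_i=1$, $\sum_j a_j\ge B$ and $\omega=L$; and $0$ otherwise. A strategy is a map $\sigma_i:\{H,L\}\to[0,1]$ giving the probability of action $1$ after each signal; Bayes-Nash equilibrium is defined as usual. A profile is non-trivial if $\Pr_\sigma(\sum_i a_i\ge B)>0$, and symmetric if all players use the same strategy. It is known that each $\Gamma(B,n)$ has a unique symmetric non-trivial Bayes-Nash equilibrium, in which each player plays $1$ with probability $1$ after signal $H$ and with some probability $\lambda\in[0,1)$ after signal $L$. *)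

theory Defs
  imports Complex_Main
begin

text \<open>Crowdfunding game Gamma(B,n) with signal precision p.
  States and signals are encoded as bool: True = H, False = L.
  Players are 0,...,n-1 (player 0 is "player 1" of the paper).
  A (possibly asymmetric) profile is sigma :: nat => bool => real,
  sigma i s = probability that player i plays action 1 after signal s.
  An action profile is represented by the set A of players choosing action 1.\<close>

definition sig_prob :: "real \<Rightarrow> bool \<Rightarrow> bool \<Rightarrow> real" where
  "sig_prob p w s = (if s = w then p else 1 - p)"

definition is_strategy :: "(bool \<Rightarrow> real) \<Rightarrow> bool" where
  "is_strategy f \<longleftrightarrow> (\<forall>s. 0 \<le> f s \<and> f s \<le> 1)"

definition act_prob :: "real \<Rightarrow> (bool \<Rightarrow> real) \<Rightarrow> bool \<Rightarrow> real" where
  "act_prob p f w = (\<Sum>s\<in>(UNIV::bool set). sig_prob p w s * f s)"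

text \<open>Probability of action profile A (set of players playing 1), conditional on state w.
  Signals are conditionally independent and each action depends only on the own signal.\<close>
definition prof_prob :: "real \<Rightarrow> nat \<Rightarrow> (nat \<Rightarrow> bool \<Rightarrow> real) \<Rightarrow> bool \<Rightarrow> nat set \<Rightarrow> real" where
  "prof_prob p n \<sigma> w A =
     (\<Prod>i<n. if i \<in> A then act_prob p (\<sigma> i) w else 1 - act_prob p (\<sigma> i) w)"

definition prob_given_state ::
  "real \<Rightarrow> nat \<Rightarrow> (nat \<Rightarrow> bool \<Rightarrow> real) \<Rightarrow> bool \<Rightarrow> (nat set \<Rightarrow> bool) \<Rightarrow> real" where
  "prob_given_state p n \<sigma> w E = (\<Sum>A\<in>Pow {..<n}. if E A then prof_prob p n \<sigma> w A else 0)"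

definition prob_event ::
  "real \<Rightarrow> nat \<Rightarrow> (nat \<Rightarrow> bool \<Rightarrow> real) \<Rightarrow> (nat set \<Rightarrow> bool) \<Rightarrow> real" where
  "prob_event p n \<sigma> E = (\<Sum>w\<in>(UNIV::bool set). 1/2 * prob_given_state p n \<sigma> w E)"

definition prob_given_state_first ::
  "real \<Rightarrow> nat \<Rightarrow> (nat \<Rightarrow> bool \<Rightarrow> real) \<Rightarrow> bool \<Rightarrow> (nat set \<Rightarrow> bool) \<Rightarrow> real" where
  "prob_given_state_first p n \<sigma> w E =
     prob_given_state p n \<sigma> w (\<lambda>A. E A \<and> 0 \<in> A) / prob_given_state p n \<sigma> w (\<lambda>A. 0 \<in> A)"

definition state_payoff :: "bool \<Rightarrow> real" where
  "state_payoff w = (if w then 1 else -1)"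

definition exp_payoff :: "real \<Rightarrow> nat \<Rightarrow> nat \<Rightarrow> (nat \<Rightarrow> bool \<Rightarrow> real) \<Rightarrow> nat \<Rightarrow> real" where
  "exp_payoff p B n \<sigma> i =
     (\<Sum>w\<in>(UNIV::bool set). 1/2 *
        (\<Sum>A\<in>Pow {..<n}. prof_prob p n \<sigma> w A *
            (if i \<in> A \<and> B \<le> card A then state_payoff w else 0)))"

definition is_BNE :: "real \<Rightarrow> nat \<Rightarrow> nat \<Rightarrow> (nat \<Rightarrow> bool \<Rightarrow> real) \<Rightarrow> bool" where
  "is_BNE p B n \<sigma> \<longleftrightarrow>
     (\<forall>i<n. is_strategy (\<sigma> i)) \<and>
     (\<forall>i<n. \<forall>\<tau>. is_strategy \<tau> \<longrightarrow> exp_payoff p B n (\<sigma>(i := \<tau>)) i \<le> exp_payoff p B n \<sigma> i)"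

definition is_symmetric :: "nat \<Rightarrow> (nat \<Rightarrow> bool \<Rightarrow> real) \<Rightarrow> bool" where
  "is_symmetric n \<sigma> \<longleftrightarrow> (\<forall>i<n. \<forall>j<n. \<sigma> i = \<sigma> j)"

definition is_nontrivial :: "real \<Rightarrow> nat \<Rightarrow> nat \<Rightarrow> (nat \<Rightarrow> bool \<Rightarrow> real) \<Rightarrow> bool" where
  "is_nontrivial p B n \<sigma> \<longleftrightarrow> prob_event p n \<sigma> (\<lambda>A. B \<le> card A) > 0"

end

theory Submission
  imports Defs
begin


definition PP :: "nat set \<Rightarrow> (nat \<Rightarrow> real) \<Rightarrow> nat set \<Rightarrow> real" where
  "PP S q A = (\<Prod>i\<in>S. if i \<in> A then q i else 1 - q i)"

definition SW :: "nat set \<Rightarrow> (nat \<Rightarrow> real) \<Rightarrow> (nat set \<Rightarrow> bool) \<Rightarrow> real" where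
  "SW S q Q = (\<Sum>A\<in>Pow S. if Q A then PP S q A else 0)"

lemma PP_insert: "x \<notin> S \<Longrightarrow> finite S \<Longrightarrow>
   PP (insert x S) q A = (if x \<in> A then q x else 1 - q x) * PP S q A"
  unfolding PP_def by simp

lemma PP_insert_set: "x \<notin> S \<Longrightarrow> PP S q (insert x A) = PP S q A"
  unfolding PP_def by (rule prod.cong) auto

lemma PP_cong: "(\<And>i. i \<in> S \<Longrightarrow> q i = q' i) \<Longrightarrow> PP S q A = PP S q' A"
  unfolding PP_def by (rule prod.cong) auto

lemma SW_cong: "(\<And>i. i \<in> S \<Longrightarrow> q i = q' i) \<Longrightarrow> (\<And>A. A \<subseteq> S \<Longrightarrow> Q A = Q' A)
   \<Longrightarrow> SW S q Q = SW S q' Q'"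
  unfolding SW_def by (rule sum.cong) (auto intro: PP_cong)

lemma PP_nonneg: "(\<And>i. i \<in> S \<Longrightarrow> 0 \<le> q i \<and> q i \<le> 1) \<Longrightarrow> 0 \<le> PP S q A"
  unfolding PP_def by (rule prod_nonneg) auto

lemma SW_nonneg: "(\<And>i. i \<in> S \<Longrightarrow> 0 \<le> q i \<and> q i \<le> 1) \<Longrightarrow> 0 \<le> SW S q Q"
  unfolding SW_def by (rule sum_nonneg) (auto intro: PP_nonneg)

lemma SW_mono_pred: "(\<And>i. i \<in> S \<Longrightarrow> 0 \<le> q i \<and> q i \<le> 1) \<Longrightarrow>
   (\<And>A. A \<subseteq> S \<Longrightarrow> Q A \<Longrightarrow> Q' A) \<Longrightarrow> SW S q Q \<le> SW S q Q'"
  unfolding SW_def by (rule sum_mono) (auto intro: PP_nonneg)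

lemma SW_split:
  assumes "x \<notin> S" "finite S"
  shows "SW (insert x S) q Q = q x * SW S q (\<lambda>A. Q (insert x A)) + (1 - q x) * SW S q Q"
proof -
  have disj: "Pow S \<inter> insert x ` Pow S = {}" using assms(1) by auto
  have inj: "inj_on (insert x) (Pow S)"
    using assms(1) by (auto simp: inj_on_def)
  have "SW (insert x S) q Q = (\<Sum>A\<in>Pow S. if Q A then PP (insert x S) q A else 0)
      + (\<Sum>A\<in>insert x ` Pow S. if Q A then PP (insert x S) q A else 0)"
    unfolding SW_def Pow_insert using assms disj by (intro sum.union_disjoint) auto
  also have "(\<Sum>A\<in>Pow S. if Q A then PP (insert x S) q A else 0)
     = (\<Sum>A\<in>Pow S. (1 - q x) * (if Q A then PP S q A else 0))"
    using assms by (intro sum.cong) (auto simp: PP_insert)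
  also have "(\<Sum>A\<in>insert x ` Pow S. if Q A then PP (insert x S) q A else 0)
     = (\<Sum>A\<in>Pow S. if Q (insert x A) then PP (insert x S) q (insert x A) else 0)"
    by (rule sum.reindex[OF inj, unfolded comp_def])
  also have "\<dots> = (\<Sum>A\<in>Pow S. q x * (if Q (insert x A) then PP S q A else 0))"
    using assms by (intro sum.cong) (auto simp: PP_insert PP_insert_set)
  finally show ?thesis unfolding SW_def by (simp add: sum_distrib_left)
qed

lemma SW_empty: "SW {} q Q = (if Q {} then 1 else 0)"
  by (simp add: SW_def PP_def)

lemma SW_total: "finite S \<Longrightarrow> SW S (\<lambda>_. a) (\<lambda>_. True) = 1"
proof (induction S rule: finite_induct)
  case empty then show ?case by (simp add: SW_def PP_def)
next
  case (insert x S) then show ?case by (simp add: SW_split)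
qed

lemma SW_card_cong: "finite S \<Longrightarrow> x \<notin> S \<Longrightarrow>
  SW S q (\<lambda>A. P (card (insert x A))) = SW S q (\<lambda>A. P (Suc (card A)))"
proof (rule SW_cong)
  fix A assume "finite S" "x \<notin> S" "A \<subseteq> S"
  then have "finite A" "x \<notin> A" by (auto dest: finite_subset)
  then show "P (card (insert x A)) = P (Suc (card A))" by simp
qed auto

lemma SW_mono_a:
  assumes "finite S" "0 \<le> a'" "a' \<le> a" "a \<le> 1"
  shows "\<forall>P. (\<forall>i. P i \<longrightarrow> P (Suc i)) \<longrightarrow>
     SW S (\<lambda>_. a') (\<lambda>A. P (card A)) \<le> SW S (\<lambda>_. a) (\<lambda>A. P (card A))"
  using assms(1)
proof (induction S rule: finite_induct)
  case empty then show ?case by (simp add: SW_empty)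
next
  case (insert x S)
  show ?case
  proof (intro allI impI)
    fix P :: "nat \<Rightarrow> bool" assume up: "\<forall>i. P i \<longrightarrow> P (Suc i)"
    define W where "W b R = SW S (\<lambda>_. b) (\<lambda>A. R (card A))" for b R
    have e: "SW (insert x S) (\<lambda>_. b) (\<lambda>A. P (card A)) = b * W b (\<lambda>i. P (Suc i)) + (1 - b) * W b P" for b
      unfolding W_def using insert by (simp add: SW_split SW_card_cong)
    have up2: "\<forall>i. P (Suc i) \<longrightarrow> P (Suc (Suc i))" using up by auto
    have i1: "W a' (\<lambda>i. P (Suc i)) \<le> W a (\<lambda>i. P (Suc i))" unfolding W_def
      using insert.IH[rule_format, of "\<lambda>i. P (Suc i)"] up2 by simp
    have i0: "W a' P \<le> W a P" unfolding W_def using insert.IH[rule_format, of P] up by simp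
    have m: "W a' P \<le> W a' (\<lambda>i. P (Suc i))" unfolding W_def
      using assms up by (intro SW_mono_pred) auto
    have n0: "0 \<le> W a' P" "0 \<le> W a P" unfolding W_def using assms by (auto intro!: SW_nonneg)
    have "a' * W a' (\<lambda>i. P (Suc i)) + (1 - a') * W a' P
        \<le> a * W a' (\<lambda>i. P (Suc i)) + (1 - a) * W a' P"
    proof -
      have h: "0 \<le> (a - a') * (W a' (\<lambda>i. P (Suc i)) - W a' P)" using m assms by simp
      have "(a - a') * (W a' (\<lambda>i. P (Suc i)) - W a' P) = a * W a' (\<lambda>i. P (Suc i)) + (1 - a) * W a' P
         - (a' * W a' (\<lambda>i. P (Suc i)) + (1 - a') * W a' P)" by (simp add: algebra_simps)
      then show ?thesis using h by linarith
    qed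
    also have "\<dots> \<le> a * W a (\<lambda>i. P (Suc i)) + (1 - a) * W a P"
      using i0 i1 assms by (intro add_mono mult_left_mono) auto
    finally show "SW (insert x S) (\<lambda>_. a') (\<lambda>A. P (card A)) \<le> SW (insert x S) (\<lambda>_. a) (\<lambda>A. P (card A))"
      unfolding e .
  qed
qed

lemma PP_const: "finite S \<Longrightarrow> A \<subseteq> S \<Longrightarrow> PP S (\<lambda>_. a) A = a ^ card A * (1 - a) ^ (card S - card A)"
proof -
  assume f: "finite S" and A: "A \<subseteq> S"
  have "(\<Prod>i\<in>S. if i \<in> A then a else 1 - a) = (\<Prod>i\<in>S \<inter> {i. i\<in>A}. a) * (\<Prod>i\<in>S \<inter> - {i. i\<in>A}. 1 - a)"
    using f by (rule prod.If_cases)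
  also have "S \<inter> {i. i\<in>A} = A" using A by auto
  also have "S \<inter> - {i. i\<in>A} = S - A" by auto
  finally show ?thesis using f A by (simp add: PP_def card_Diff_subset finite_subset)
qed

lemma SW_point: assumes "finite S"
  shows "SW S (\<lambda>_. a) (\<lambda>A. card A = k) = real (card S choose k) * a ^ k * (1 - a) ^ (card S - k)"
proof -
  have "SW S (\<lambda>_. a) (\<lambda>A. card A = k) = (\<Sum>A\<in>{A\<in>Pow S. card A = k}. PP S (\<lambda>_. a) A)"
    unfolding SW_def using assms by (simp add: sum.inter_filter[symmetric])
  also have "\<dots> = (\<Sum>A\<in>{A\<in>Pow S. card A = k}. a ^ k * (1 - a) ^ (card S - k))"
    using assms by (intro sum.cong) (auto simp: PP_const)
  also have "{A\<in>Pow S. card A = k} = {B. B \<subseteq> S \<and> card B = k}" by auto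
  finally show ?thesis using n_subsets[OF assms, of k] by simp
qed

lemma SW_diff: "SW S q (\<lambda>A. k \<le> card A) = SW S q (\<lambda>A. card A = k) + SW S q (\<lambda>A. Suc k \<le> card A)"
  unfolding SW_def by (subst sum.distrib[symmetric]) (rule sum.cong, auto)



definition bp :: "nat \<Rightarrow> real \<Rightarrow> nat \<Rightarrow> real" where
  "bp m a k = real (m choose k) * a ^ k * (1 - a) ^ (m - k)"

lemma bp_sum: "(\<Sum>k\<le>m. bp m a k) = 1"
  using binomial_ring[of a "1 - a" m] by (simp add: bp_def)

lemma bp_nonneg: "0 \<le> a \<Longrightarrow> a \<le> 1 \<Longrightarrow> 0 \<le> bp m a k"
  unfolding bp_def by simp

lemma bp_le1: assumes "0 \<le> a" "a \<le> 1" shows "bp m a k \<le> 1"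
proof (cases "k \<le> m")
  case True
  have "bp m a k \<le> (\<Sum>k\<le>m. bp m a k)"
    by (rule member_le_sum) (use True assms bp_nonneg in auto)
  then show ?thesis by (simp add: bp_sum)
next
  case False then have "m choose k = 0" by (intro binomial_eq_0) simp
  then show ?thesis using False by (simp add: bp_def binomial_eq_0)
qed

lemma choose_step: "s < m \<Longrightarrow> (m choose Suc s) * Suc s = (m choose s) * (m - s)"
  using binomial_absorption[of s m] binomial_absorb_comp[of m s] by (simp add: mult.commute)

lemma bp_step: assumes "s < m"
  shows "bp m a (Suc s) * (real s + 1) * (1 - a) = bp m a s * (real m - real s) * a"
proof -
  have "real ((m choose Suc s) * Suc s) = real ((m choose s) * (m - s))"
    using choose_step[OF assms] by simp
  then have c: "real (m choose Suc s) * (real s + 1) = real (m choose s) * (real m - real s)"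
    using assms by (simp add: of_nat_diff algebra_simps)
  have e: "m - s = Suc (m - Suc s)" using assms by simp
  define C1 where "C1 = real (m choose Suc s)"
  define C0 where "C0 = real (m choose s)"
  define Q where "Q = (1 - a) ^ (m - Suc s)"
  have "bp m a (Suc s) * (real s + 1) * (1 - a) = (C1 * (real s + 1)) * (a * a ^ s * Q * (1 - a))"
    unfolding bp_def C1_def Q_def by (simp add: algebra_simps)
  also have "\<dots> = (C0 * (real m - real s)) * (a * a ^ s * Q * (1 - a))"
    using c unfolding C1_def C0_def by simp
  also have "\<dots> = bp m a s * (real m - real s) * a"
    unfolding bp_def C0_def Q_def e by (simp add: algebra_simps)
  finally show ?thesis .
qed

lemma bp_sym: assumes "k \<le> m" shows "bp m a k = bp m (1 - a) (m - k)"
proof -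
  have "m choose k = m choose (m - k)" using assms by (rule binomial_symmetric)
  moreover have "m - (m - k) = k" using assms by simp
  ultimately show ?thesis unfolding bp_def by (simp add: mult.commute mult.left_commute)
qed



lemma key_ineq:
  fixes a m J u x :: real
  assumes a: "0 < a" "a < 1" and m: "0 < m" and J: "0 \<le> J" "J \<le> a * m"
    and x: "x * (1 - a) = J / (a * m)" and u: "u \<le> a * m + J"
  shows "(1 - x) * u * (1 - a) \<le> (m + 1 - u) * a"
proof -
  define c where "c = 1 - J / (a * m)"
  have am: "0 < a * m" using a m by simp
  have c0: "0 \<le> c" unfolding c_def using J am by (simp add: field_simps)
  have "u * c \<le> (a * m + J) * c" using u c0 by (rule mult_right_mono)
  also have "(a * m + J) * c = a * m - J * J / (a * m)"
  proof -
    have "(a * m + J) * c = (a * m + J) - (a * m + J) * J / (a * m)" by (simp add: c_def algebra_simps)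
    also have "(a * m + J) * J / (a * m) = (a * m) * J / (a * m) + J * J / (a * m)"
      by (simp add: add_divide_distrib distrib_right)
    also have "(a * m) * J / (a * m) = J" by (rule nonzero_mult_div_cancel_left[OF less_imp_neq[OF am, THEN not_sym]])
    finally show ?thesis by simp
  qed
  also have "\<dots> \<le> a * m" using am J by simp
  finally have uc: "u * c \<le> a * m" .
  have "(m + 1 - u) * a - (1 - x) * u * (1 - a) = (m + 1) * a - u * (1 - x * (1 - a))"
    by (simp add: algebra_simps)
  also have "\<dots> = (m + 1) * a - u * c" unfolding c_def x ..
  finally show ?thesis using uc a by (simp add: algebra_simps)
qed

lemma bp_conc_up:
  assumes a: "0 < a" "a < 1" and k: "real k \<le> a * m" and J1: "1 \<le> J"
    and JV: "real J ^ 2 \<le> a * (1 - a) * m / 2"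
  shows "bp m a k \<le> 2 / (real J + 1)"
proof -
  define V where "V = a * (1 - a) * m"
  have J2: "real J \<le> real J ^ 2" using J1 by (simp add: power2_eq_square)
  have "1 \<le> real J ^ 2" using J1 by simp
  then have V0: "0 < V" using JV V_def by simp
  have m0: "0 < m" using V0 a unfolding V_def by (simp add: zero_less_mult_iff)
  have JV2: "real J \<le> V / 2" using J2 JV V_def by linarith
  have "V / 2 = ((1 - a) * m) * (a / 2)" unfolding V_def by simp
  also have "\<dots> \<le> ((1 - a) * m) * 1" using a m0 by (intro mult_left_mono) auto
  finally have "V / 2 \<le> (1 - a) * m" by simp
  then have Jm: "real J \<le> (1 - a) * m" using JV2 by simp
  have "V / 2 = (a * m) * ((1 - a) / 2)" unfolding V_def by simp
  also have "\<dots> \<le> (a * m) * 1" using a m0 by (intro mult_left_mono) auto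
  finally have "V / 2 \<le> a * m" by simp
  then have Jam: "real J \<le> a * m" using JV2 by simp
  have "real (k + J) \<le> real m" using k Jm by (simp add: algebra_simps)
  then have kJ: "k + J \<le> m" by (simp only: of_nat_le_iff)
  define x where "x = real J / V"
  have x0: "0 \<le> x" unfolding x_def using V0 by simp
  have xh: "x \<le> 1/2" unfolding x_def using V0 JV2 by (simp add: field_simps)
  have x1: "x * (1 - a) = real J / (a * m)" unfolding x_def V_def using a m0 by (simp add: field_simps)
  have Jx: "real J * x \<le> 1/2" unfolding x_def using V0 JV V_def by (simp add: field_simps power2_eq_square)
  have ind: "j \<le> J \<Longrightarrow> bp m a k * (1 - x) ^ j \<le> bp m a (k + j)" for j
  proof (induction j)
    case 0 then show ?case by simp
  next
    case (Suc j)
    define s where "s = k + j"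
    have sm: "s < m" unfolding s_def using Suc.prems kJ by simp
    have u: "real s + 1 \<le> a * m + real J" unfolding s_def using k Suc.prems by simp
    have key: "(1 - x) * (real s + 1) * (1 - a) \<le> (real m - real s) * a"
      using key_ineq[of a "real m" "real J" x "real s + 1"] a m0 Jam x1 u by simp
    have bs: "0 \<le> bp m a s" by (rule bp_nonneg) (use a in auto)
    have pos: "0 < (real s + 1) * (1 - a)" using a by simp
    have st: "bp m a (Suc s) * ((real s + 1) * (1 - a)) = bp m a s * ((real m - real s) * a)"
      using bp_step[OF sm] by (simp add: mult.assoc)
    have "bp m a s * ((1 - x) * (real s + 1) * (1 - a)) \<le> bp m a s * ((real m - real s) * a)"
      using key bs by (rule mult_left_mono)
    then have "(bp m a s * (1 - x)) * ((real s + 1) * (1 - a)) \<le> bp m a (Suc s) * ((real s + 1) * (1 - a))"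
      unfolding st by (simp add: mult.assoc)
    then have step: "bp m a s * (1 - x) \<le> bp m a (Suc s)"
      using pos by (rule mult_right_le_imp_le)
    have ih: "bp m a k * (1 - x) ^ j \<le> bp m a s" unfolding s_def using Suc by simp
    have "bp m a k * (1 - x) ^ Suc j = (bp m a k * (1 - x) ^ j) * (1 - x)" by simp
    also have "\<dots> \<le> bp m a s * (1 - x)" using ih xh by (intro mult_right_mono) auto
    also have "\<dots> \<le> bp m a (Suc s)" by (rule step)
    finally show ?case unfolding s_def by simp
  qed
  have half: "bp m a k / 2 \<le> bp m a (k + j)" if "j \<le> J" for j
  proof -
    have "(1 - x) ^ J \<le> (1 - x) ^ j" using that x0 xh by (intro power_decreasing) auto
    moreover have "1 + real J * (- x) \<le> (1 + (- x)) ^ J" using xh by (intro Bernoulli_inequality) simp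
    ultimately have "1/2 \<le> (1 - x) ^ j" using Jx by simp
    then have "bp m a k * (1/2) \<le> bp m a k * (1 - x) ^ j"
      using bp_nonneg[of a m k] a by (intro mult_left_mono) auto
    then show ?thesis using ind[OF that] by simp
  qed
  have "(\<Sum>j\<le>J. bp m a k / 2) \<le> (\<Sum>j\<le>J. bp m a (k + j))"
    using half by (intro sum_mono) auto
  also have "(\<Sum>j\<le>J. bp m a (k + j)) = (\<Sum>i\<in>(\<lambda>j. k + j) ` {..J}. bp m a i)"
    by (subst sum.reindex) (auto simp: inj_on_def)
  also have "\<dots> \<le> (\<Sum>i\<le>m. bp m a i)"
    using kJ a by (intro sum_mono2) (auto intro: bp_nonneg)
  also have "\<dots> = 1" by (rule bp_sum)
  finally have f: "(\<Sum>j\<le>J. bp m a k / 2) \<le> 1" .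
  have "(\<Sum>j\<le>J. bp m a k / 2) = (real J + 1) * (bp m a k / 2)" by simp
  then have "(real J + 1) * bp m a k \<le> 2" using f by linarith
  then show ?thesis by (simp add: field_simps)
qed



lemma bp_conc:
  assumes a: "0 < a" "a < 1" and k: "k \<le> m"
    and JV: "real J ^ 2 \<le> a * (1 - a) * m / 2"
  shows "bp m a k \<le> 2 / (real J + 1)"
proof (cases "J = 0")
  case True then show ?thesis using bp_le1[of a m k] a by simp
next
  case False
  then have J1: "1 \<le> J" by simp
  show ?thesis
  proof (cases "real k \<le> a * m")
    case True show ?thesis using bp_conc_up[OF a True J1 JV] by simp
  next
    case False
    have "real (m - k) = real m - real k" using k by simp
    also have "\<dots> \<le> (1 - a) * m" using False by (simp add: algebra_simps)
    finally have k': "real (m - k) \<le> (1 - a) * m" .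
    have JV': "real J ^ 2 \<le> (1 - a) * (1 - (1 - a)) * m / 2" using JV by (simp add: algebra_simps)
    have "bp m (1 - a) (m - k) \<le> 2 / (real J + 1)"
      using bp_conc_up[of "1 - a" "m - k" m J] a k' J1 JV' by simp
    then show ?thesis using bp_sym[OF k, of a] by simp
  qed
qed

lemma D_bound:
  assumes c: "0 < c" "c \<le> a" and a1: "a \<le> 1" and k: "k \<le> m" and m: "0 < m"
  shows "((1 - a) * bp m a k) ^ 2 \<le> 8 / (c * m)"
proof (cases "a = 1")
  case True then show ?thesis using c m by simp
next
  case False
  then have a: "0 < a" "a < 1" using c a1 by auto
  define V where "V = a * (1 - a) * m"
  have V0: "0 < V" unfolding V_def using a m by simp
  define t where "t = sqrt (V / 2)"
  have t0: "0 < t" unfolding t_def using V0 by simp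
  have tt: "t ^ 2 = V / 2" unfolding t_def using V0 by simp
  define J where "J = nat \<lfloor>t\<rfloor>"
  have Jt: "real J \<le> t" unfolding J_def using t0 by linarith
  have tJ: "t < real J + 1" unfolding J_def using t0 by linarith
  have "real J ^ 2 \<le> t ^ 2" using Jt by (intro power_mono) auto
  then have JV: "real J ^ 2 \<le> a * (1 - a) * m / 2" using tt V_def by simp
  have b: "bp m a k \<le> 2 / (real J + 1)" by (rule bp_conc[OF a k JV])
  have b0: "0 \<le> (1 - a) * bp m a k" using a bp_nonneg[of a m k] by simp
  have "(1 - a) * bp m a k \<le> (1 - a) * (2 / (real J + 1))" using b a by (intro mult_left_mono) auto
  also have "\<dots> \<le> (1 - a) * (2 / t)" using a t0 tJ by (intro mult_left_mono divide_left_mono) auto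
  finally have "((1 - a) * bp m a k) ^ 2 \<le> ((1 - a) * (2 / t)) ^ 2" using b0 by (intro power_mono) auto
  also have "\<dots> = 4 * (1 - a) ^ 2 / t ^ 2" by (simp add: power2_eq_square algebra_simps)
  also have "\<dots> = 8 * (1 - a) / (a * m)" unfolding tt V_def using a m
    by (simp add: field_simps power2_eq_square)
  also have "\<dots> \<le> 8 / (c * m)" using a c m
    by (simp add: field_simps) (smt (verit, best) mult_le_cancel_right mult_nonneg_nonneg of_nat_0_less_iff mult_mono)
  finally show ?thesis .
qed



lemma act_T: "act_prob p f True = p * f True + (1 - p) * f False"
  by (simp add: act_prob_def sig_prob_def UNIV_bool)
lemma act_F: "act_prob p f False = (1 - p) * f True + p * f False"
  by (simp add: act_prob_def sig_prob_def UNIV_bool)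

lemma act_bounds: "is_strategy f \<Longrightarrow> 0 \<le> p \<Longrightarrow> p \<le> 1 \<Longrightarrow> 0 \<le> act_prob p f w \<and> act_prob p f w \<le> 1"
  unfolding is_strategy_def
  by (cases w) (auto simp: act_T act_F intro!: add_nonneg_nonneg mult_nonneg_nonneg convex_bound_le)

lemma pgs_SW: "prob_given_state p n s w Q = SW {..<n} (\<lambda>i. act_prob p (s i) w) Q"
  unfolding prob_given_state_def SW_def prof_prob_def PP_def lessThan_def ..

lemma lessThan_insert0: "1 \<le> (n::nat) \<Longrightarrow> {..<n} = insert 0 {1..<n}"
  by auto

lemma SW_false: "(\<And>A. A \<subseteq> S \<Longrightarrow> \<not> Q A) \<Longrightarrow> SW S q Q = 0"
  unfolding SW_def by (rule sum.neutral) auto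

lemma SW_sym: assumes "is_symmetric n s" "S \<subseteq> {..<n}" "0 < n"
  shows "SW S (\<lambda>i. act_prob p (s i) w) Q = SW S (\<lambda>_. act_prob p (s 0) w) Q"
proof (rule SW_cong)
  fix i assume "i \<in> S"
  then have "i < n" using assms(2) by auto
  then have "s i = s 0" using assms(1,3) unfolding is_symmetric_def by blast
  then show "act_prob p (s i) w = act_prob p (s 0) w" by simp
qed simp

lemma exp_payoff_SW: "exp_payoff p B n \<sigma> 0 =
   (\<Sum>w\<in>(UNIV::bool set). 1/2 * (state_payoff w * SW {..<n} (\<lambda>i. act_prob p (\<sigma> i) w) (\<lambda>A. 0 \<in> A \<and> B \<le> card A)))"
proof -
  have "\<And>w. (\<Sum>A\<in>Pow {..<n}. prof_prob p n \<sigma> w A * (if 0 \<in> A \<and> B \<le> card A then state_payoff w else 0))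
     = state_payoff w * SW {..<n} (\<lambda>i. act_prob p (\<sigma> i) w) (\<lambda>A. 0 \<in> A \<and> B \<le> card A)"
    unfolding SW_def sum_distrib_left
    by (rule sum.cong) (auto simp: prof_prob_def PP_def lessThan_def)
  then show ?thesis unfolding exp_payoff_def by simp
qed

context
  fixes p :: real and n B :: nat and s :: "nat \<Rightarrow> bool \<Rightarrow> real"
  assumes n1: "1 \<le> n" and sym: "is_symmetric n s"
begin

definition "aw w = act_prob p (s 0) w"
definition "G w = SW {1..<n} (\<lambda>_. aw w) (\<lambda>A. B \<le> Suc (card A))"
definition "H w = SW {1..<n} (\<lambda>_. aw w) (\<lambda>A. B \<le> card A)"

lemma sym_on: "i \<in> {1..<n} \<Longrightarrow> s i = s 0"
proof -
  assume "i \<in> {1..<n}"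
  then have "i < n" "0 < n" by auto
  then show ?thesis using sym unfolding is_symmetric_def by blast
qed

lemma exp_dev: "exp_payoff p B n (s(0 := \<tau>)) 0 =
   1/2 * (act_prob p \<tau> True * G True) - 1/2 * (act_prob p \<tau> False * G False)"
proof -
  have e: "SW {..<n} (\<lambda>i. act_prob p ((s(0 := \<tau>)) i) w) (\<lambda>A. 0 \<in> A \<and> B \<le> card A)
         = act_prob p \<tau> w * G w" for w
  proof -
    have "SW {..<n} (\<lambda>i. act_prob p ((s(0 := \<tau>)) i) w) (\<lambda>A. 0 \<in> A \<and> B \<le> card A)
      = act_prob p \<tau> w * SW {1..<n} (\<lambda>i. act_prob p ((s(0 := \<tau>)) i) w) (\<lambda>A. 0 \<in> insert 0 A \<and> B \<le> card (insert 0 A))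
      + (1 - act_prob p \<tau> w) * SW {1..<n} (\<lambda>i. act_prob p ((s(0 := \<tau>)) i) w) (\<lambda>A. 0 \<in> A \<and> B \<le> card A)"
      unfolding lessThan_insert0[OF n1] by (subst SW_split) auto
    also have "SW {1..<n} (\<lambda>i. act_prob p ((s(0 := \<tau>)) i) w) (\<lambda>A. 0 \<in> A \<and> B \<le> card A) = 0"
      by (rule SW_false) auto
    also have "SW {1..<n} (\<lambda>i. act_prob p ((s(0 := \<tau>)) i) w) (\<lambda>A. 0 \<in> insert 0 A \<and> B \<le> card (insert 0 A)) = G w"
      unfolding G_def aw_def
    proof (rule SW_cong)
      fix A assume "A \<subseteq> {1..<n}"
      then have "finite A" "0 \<notin> A" by (auto dest: finite_subset)
      then show "(0 \<in> insert 0 A \<and> B \<le> card (insert 0 A)) = (B \<le> Suc (card A))" by simp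
    qed (auto simp: sym_on)
    finally show ?thesis by simp
  qed
  show ?thesis unfolding exp_payoff_SW e by (simp add: UNIV_bool state_payoff_def)
qed

lemma uncond: "prob_given_state p n s w (\<lambda>A. B \<le> card A) = aw w * G w + (1 - aw w) * H w"
proof -
  have "prob_given_state p n s w (\<lambda>A. B \<le> card A) = SW (insert 0 {1..<n}) (\<lambda>_. aw w) (\<lambda>A. B \<le> card A)"
    unfolding pgs_SW aw_def lessThan_insert0[OF n1, symmetric]
    by (rule SW_sym[OF sym]) (use n1 in auto)
  also have "\<dots> = aw w * SW {1..<n} (\<lambda>_. aw w) (\<lambda>A. B \<le> card (insert 0 A)) + (1 - aw w) * H w"
    unfolding H_def by (subst SW_split) auto
  also have "SW {1..<n} (\<lambda>_. aw w) (\<lambda>A. B \<le> card (insert 0 A)) = G w"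
    unfolding G_def by (rule SW_card_cong) auto
  finally show ?thesis .
qed

lemma first: assumes "0 < aw w"
  shows "prob_given_state_first p n s w (\<lambda>A. B \<le> card A) = G w"
proof -
  have num: "prob_given_state p n s w (\<lambda>A. B \<le> card A \<and> 0 \<in> A) = aw w * G w"
  proof -
    have "prob_given_state p n s w (\<lambda>A. B \<le> card A \<and> 0 \<in> A) = SW (insert 0 {1..<n}) (\<lambda>_. aw w) (\<lambda>A. B \<le> card A \<and> 0 \<in> A)"
      unfolding pgs_SW aw_def lessThan_insert0[OF n1, symmetric]
      by (rule SW_sym[OF sym]) (use n1 in auto)
    also have "\<dots> = aw w * SW {1..<n} (\<lambda>_. aw w) (\<lambda>A. B \<le> card (insert 0 A) \<and> 0 \<in> insert 0 A)
         + (1 - aw w) * SW {1..<n} (\<lambda>_. aw w) (\<lambda>A. B \<le> card A \<and> 0 \<in> A)"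
      by (subst SW_split) auto
    also have "SW {1..<n} (\<lambda>_. aw w) (\<lambda>A. B \<le> card A \<and> 0 \<in> A) = 0" by (rule SW_false) auto
    also have "SW {1..<n} (\<lambda>_. aw w) (\<lambda>A. B \<le> card (insert 0 A) \<and> 0 \<in> insert 0 A) = G w"
      unfolding G_def
    proof (rule SW_cong)
      fix A assume "A \<subseteq> {1..<n}"
      then have "finite A" "0 \<notin> A" by (auto dest: finite_subset)
      then show "(B \<le> card (insert 0 A) \<and> 0 \<in> insert 0 A) = (B \<le> Suc (card A))" by simp
    qed auto
    finally show ?thesis by simp
  qed
  have den: "prob_given_state p n s w (\<lambda>A. 0 \<in> A) = aw w"
  proof -
    have "prob_given_state p n s w (\<lambda>A. 0 \<in> A) = SW (insert 0 {1..<n}) (\<lambda>_. aw w) (\<lambda>A. 0 \<in> A)"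
      unfolding pgs_SW aw_def lessThan_insert0[OF n1, symmetric]
      by (rule SW_sym[OF sym]) (use n1 in auto)
    also have "\<dots> = aw w * SW {1..<n} (\<lambda>_. aw w) (\<lambda>A. 0 \<in> insert 0 A)
         + (1 - aw w) * SW {1..<n} (\<lambda>_. aw w) (\<lambda>A. 0 \<in> A)"
      by (subst SW_split) auto
    also have "SW {1..<n} (\<lambda>_. aw w) (\<lambda>A. 0 \<in> A) = 0" by (rule SW_false) auto
    also have "SW {1..<n} (\<lambda>_. aw w) (\<lambda>A. 0 \<in> insert 0 A) = 1"
      using SW_total[of "{1..<n}" "aw w"] by simp
    finally show ?thesis by simp
  qed
  show ?thesis unfolding prob_given_state_first_def num den using assms by simp
qed

lemma G_minus_H: assumes "1 \<le> B" shows "G w - H w = bp (n - 1) (aw w) (B - 1)"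
proof -
  have "G w = SW {1..<n} (\<lambda>_. aw w) (\<lambda>A. B - 1 \<le> card A)" unfolding G_def by (rule SW_cong) auto
  also have "\<dots> = SW {1..<n} (\<lambda>_. aw w) (\<lambda>A. card A = B - 1) + H w"
    unfolding H_def SW_diff[where k="B - 1"] using assms by simp
  finally show ?thesis using SW_point[of "{1..<n}" "aw w" "B - 1"] by (simp add: bp_def)
qed


lemma G_nonneg: "0 \<le> p \<Longrightarrow> p \<le> 1 \<Longrightarrow> is_strategy (s 0) \<Longrightarrow> 0 \<le> G w"
  unfolding G_def aw_def using act_bounds by (intro SW_nonneg) blast

lemma H_le_G: "0 \<le> p \<Longrightarrow> p \<le> 1 \<Longrightarrow> is_strategy (s 0) \<Longrightarrow> H w \<le> G w"
  unfolding G_def H_def aw_def using act_bounds by (intro SW_mono_pred) auto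

lemma eq_bounds:
  assumes hp: "1/2 < p" "p < 1" and nt: "is_nontrivial p B n s" and bne: "is_BNE p B n s"
  shows "1 - p \<le> aw w \<and> aw w \<le> 1"
proof -
  have p01: "0 \<le> p" "p \<le> 1" using hp by auto
  have str: "is_strategy (s 0)" using bne n1 unfolding is_BNE_def by auto
  define t where "t = s 0 True"
  define u where "u = s 0 False"
  have t01: "0 \<le> t" "t \<le> 1" and u01: "0 \<le> u" "u \<le> 1"
    using str unfolding is_strategy_def t_def u_def by auto
  have aT: "aw True = p * t + (1 - p) * u" unfolding aw_def t_def u_def by (rule act_T)
  have aF: "aw False = (1 - p) * t + p * u" unfolding aw_def t_def u_def by (rule act_F)
  have ab: "0 \<le> aw w' \<and> aw w' \<le> 1" for w' unfolding aw_def using act_bounds[OF str p01] .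
  have G0: "0 \<le> G w'" for w' using G_nonneg[OF p01 str] .
  have HG: "H w' \<le> G w'" for w' using H_le_G[OF p01 str] .
  have pgsG: "prob_given_state p n s w' (\<lambda>A. B \<le> card A) \<le> G w'" for w'
  proof -
    have "aw w' * G w' + (1 - aw w') * H w' \<le> aw w' * G w' + (1 - aw w') * G w'"
      using HG[of w'] ab[of w'] by (intro add_left_mono mult_left_mono) auto
    then show ?thesis unfolding uncond by (simp add: algebra_simps)
  qed
  have Gpos: "0 < G True + G False"
  proof -
    have "0 < prob_event p n s (\<lambda>A. B \<le> card A)" using nt unfolding is_nontrivial_def .
    also have "prob_event p n s (\<lambda>A. B \<le> card A) = 1/2 * prob_given_state p n s True (\<lambda>A. B \<le> card A)
       + 1/2 * prob_given_state p n s False (\<lambda>A. B \<le> card A)"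
      unfolding prob_event_def by (simp add: UNIV_bool)
    finally show ?thesis using pgsG[of True] pgsG[of False] by linarith
  qed
  have mono: "aw False \<le> aw True \<Longrightarrow> G False \<le> G True"
    unfolding G_def using SW_mono_a[rule_format, of "{1..<n}" "aw False" "aw True" "\<lambda>i. B \<le> Suc i"] ab
    by auto
  have dev: "exp_payoff p B n (s(0 := \<tau>)) 0 \<le> exp_payoff p B n (s(0 := s 0)) 0" if "is_strategy \<tau>" for \<tau>
    using bne n1 that unfolding is_BNE_def by auto
  define UT where "UT = p * G True - (1 - p) * G False"
  define UF where "UF = (1 - p) * G True - p * G False"
  have E: "exp_payoff p B n (s(0 := \<tau>)) 0 = 1/2 * (\<tau> True * UT + \<tau> False * UF)" for \<tau>
    unfolding exp_dev act_T act_F UT_def UF_def by (simp add: algebra_simps)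
  have Ef: "exp_payoff p B n (s(0 := s 0)) 0 = 1/2 * (t * UT + u * UF)"
    unfolding E t_def u_def ..
  have t1: "t = 1"
  proof (rule ccontr)
    assume "t \<noteq> 1"
    then have tl: "t < 1" using t01 by simp
    have s1: "is_strategy (\<lambda>b. if b then 1 else u)" using u01 unfolding is_strategy_def by auto
    have s2: "is_strategy (\<lambda>b. if b then t else 0)" using t01 unfolding is_strategy_def by auto
    have "1/2 * (1 * UT + u * UF) \<le> 1/2 * (t * UT + u * UF)"
      using dev[OF s1] unfolding E by (simp add: t_def u_def)
    then have "(1 - t) * UT \<le> 0" by (simp add: algebra_simps)
    then have UT0: "UT \<le> 0" using tl by (simp add: mult_le_0_iff)
    have "1/2 * (t * UT + 0 * UF) \<le> 1/2 * (t * UT + u * UF)"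
      using dev[OF s2] unfolding E by (simp add: t_def u_def)
    then have uUF: "0 \<le> u * UF" by simp
    have "UT - UF = (2 * p - 1) * (G True + G False)" unfolding UT_def UF_def by (simp add: algebra_simps)
    moreover have "0 < (2 * p - 1) * (G True + G False)" using hp Gpos by simp
    ultimately have "UF < 0" using UT0 by linarith
    then have u0: "u = 0" using uUF u01 by (simp add: zero_le_mult_iff)
    have "aw False \<le> aw True" unfolding aT aF u0 using hp t01 by (simp add: mult_right_mono)
    then have GFT: "G False \<le> G True" by (rule mono)
    have "(1 - p) * G False \<le> (1 - p) * G True" using GFT hp by (intro mult_left_mono) auto
    then have "(2 * p - 1) * G True \<le> 0" using UT0 unfolding UT_def by (simp add: algebra_simps)
    then have "G True \<le> 0" using hp by (simp add: mult_le_0_iff)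
    then show False using Gpos GFT G0[of True] by linarith
  qed
  have "(1 - p) * u \<ge> 0" "p * u \<ge> 0" using hp u01 by auto
  then show ?thesis using ab[of w] aT aF t1 hp by (cases w) auto
qed
end



lemma per_n:
  assumes hp: "1/2 < p" "p < 1" and B: "1 \<le> B" "B \<le> n" and n2: "2 \<le> n"
    and sym: "is_symmetric n s" and nt: "is_nontrivial p B n s" and bne: "is_BNE p B n s"
  shows "0 \<le> prob_given_state_first p n s w (\<lambda>A. B \<le> card A) - prob_given_state p n s w (\<lambda>A. B \<le> card A)
    \<and> prob_given_state_first p n s w (\<lambda>A. B \<le> card A) - prob_given_state p n s w (\<lambda>A. B \<le> card A)
       \<le> sqrt (8 / ((1 - p) * real (n - 1)))"
proof -
  have n1: "1 \<le> n" using n2 by simp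
  note ab = eq_bounds[OF n1 sym hp nt bne, of w]
  have a0: "0 < aw p s w" using ab hp by linarith
  have "prob_given_state_first p n s w (\<lambda>A. B \<le> card A) - prob_given_state p n s w (\<lambda>A. B \<le> card A)
     = G p n B s w - (aw p s w * G p n B s w + (1 - aw p s w) * H p n B s w)"
    unfolding first[OF n1 sym a0] uncond[OF n1 sym] ..
  also have "\<dots> = (1 - aw p s w) * (G p n B s w - H p n B s w)" by (simp add: algebra_simps)
  also have "\<dots> = (1 - aw p s w) * bp (n - 1) (aw p s w) (B - 1)"
    unfolding G_minus_H[OF n1 sym B(1)] ..
  finally have D: "prob_given_state_first p n s w (\<lambda>A. B \<le> card A) - prob_given_state p n s w (\<lambda>A. B \<le> card A)
     = (1 - aw p s w) * bp (n - 1) (aw p s w) (B - 1)" .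
  have D0: "0 \<le> (1 - aw p s w) * bp (n - 1) (aw p s w) (B - 1)"
    using ab a0 bp_nonneg[of "aw p s w"] by simp
  have "((1 - aw p s w) * bp (n - 1) (aw p s w) (B - 1)) ^ 2 \<le> 8 / ((1 - p) * real (n - 1))"
    using D_bound[of "1 - p" "aw p s w" "B - 1" "n - 1"] ab hp B n2 by simp
  then have "(1 - aw p s w) * bp (n - 1) (aw p s w) (B - 1) \<le> sqrt (8 / ((1 - p) * real (n - 1)))"
    using D0 real_le_rsqrt by blast
  then show ?thesis using D D0 by simp
qed


lemma main_w:
  fixes p q :: real and B :: "nat \<Rightarrow> nat" and \<sigma> :: "nat \<Rightarrow> nat \<Rightarrow> bool \<Rightarrow> real"
  assumes hp: "1/2 < p" "p < 1"
    and hB: "\<forall>n\<ge>1. 1 \<le> B n \<and> B n \<le> n"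
    and heq: "\<forall>n\<ge>1. is_symmetric n (\<sigma> n) \<and> is_nontrivial p (B n) n (\<sigma> n) \<and> is_BNE p (B n) n (\<sigma> n)"
  shows "(\<lambda>n. prob_given_state_first p n (\<sigma> n) w (\<lambda>A. B n \<le> card A)
              - prob_given_state p n (\<sigma> n) w (\<lambda>A. B n \<le> card A)) \<longlonglongrightarrow> 0"
proof (rule tendsto_sandwich[of "\<lambda>_. 0" _ _ "\<lambda>n. sqrt (8 / ((1 - p) * real (n - 1)))"])
  have b: "\<forall>n\<ge>2. 0 \<le> prob_given_state_first p n (\<sigma> n) w (\<lambda>A. B n \<le> card A)
              - prob_given_state p n (\<sigma> n) w (\<lambda>A. B n \<le> card A)
     \<and> prob_given_state_first p n (\<sigma> n) w (\<lambda>A. B n \<le> card A)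
              - prob_given_state p n (\<sigma> n) w (\<lambda>A. B n \<le> card A) \<le> sqrt (8 / ((1 - p) * real (n - 1)))"
  proof (intro allI impI)
    fix n :: nat assume n2: "2 \<le> n"
    then have "1 \<le> n" by simp
    then show "0 \<le> prob_given_state_first p n (\<sigma> n) w (\<lambda>A. B n \<le> card A)
              - prob_given_state p n (\<sigma> n) w (\<lambda>A. B n \<le> card A)
     \<and> prob_given_state_first p n (\<sigma> n) w (\<lambda>A. B n \<le> card A)
              - prob_given_state p n (\<sigma> n) w (\<lambda>A. B n \<le> card A) \<le> sqrt (8 / ((1 - p) * real (n - 1)))"
      using per_n[OF hp _ _ n2, of "B n" "\<sigma> n" w] hB heq by blast
  qed
  then show "\<forall>\<^sub>F n in sequentially. 0 \<le> prob_given_state_first p n (\<sigma> n) w (\<lambda>A. B n \<le> card A)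
              - prob_given_state p n (\<sigma> n) w (\<lambda>A. B n \<le> card A)"
    unfolding eventually_sequentially by blast
  from b show "\<forall>\<^sub>F n in sequentially. prob_given_state_first p n (\<sigma> n) w (\<lambda>A. B n \<le> card A)
              - prob_given_state p n (\<sigma> n) w (\<lambda>A. B n \<le> card A) \<le> sqrt (8 / ((1 - p) * real (n - 1)))"
    unfolding eventually_sequentially by blast
  show "(\<lambda>_. 0) \<longlonglongrightarrow> (0::real)" by simp
  have "(\<lambda>n. (8 / (1 - p)) / real n) \<longlonglongrightarrow> 0" by (rule lim_const_over_n)
  then have "(\<lambda>n. 8 / ((1 - p) * real (Suc n - 1))) \<longlonglongrightarrow> 0" by simp
  then have "(\<lambda>n. 8 / ((1 - p) * real (n - 1))) \<longlonglongrightarrow> 0"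
    by (rule LIMSEQ_imp_Suc)
  then have "(\<lambda>n. sqrt (8 / ((1 - p) * real (n - 1)))) \<longlonglongrightarrow> sqrt 0" by (rule tendsto_real_sqrt)
  then show "(\<lambda>n. sqrt (8 / ((1 - p) * real (n - 1)))) \<longlonglongrightarrow> 0" by simp
qed


theorem lemma3:
  fixes p q :: real and B :: "nat \<Rightarrow> nat" and \<sigma> :: "nat \<Rightarrow> nat \<Rightarrow> bool \<Rightarrow> real"
  assumes hp: "1/2 < p" "p < 1"
    and hB: "\<forall>n\<ge>1. 1 \<le> B n \<and> B n \<le> n"
    and hq: "0 \<le> q" "q \<le> 1"
    and hlim: "(\<lambda>n. real (B n) / real n) \<longlonglongrightarrow> q"
    and heq: "\<forall>n\<ge>1. is_symmetric n (\<sigma> n) \<and> is_nontrivial p (B n) n (\<sigma> n) \<and> is_BNE p (B n) n (\<sigma> n)"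
  shows "(\<lambda>n. prob_given_state_first p n (\<sigma> n) True (\<lambda>A. B n \<le> card A)
              - prob_given_state p n (\<sigma> n) True (\<lambda>A. B n \<le> card A)) \<longlonglongrightarrow> 0
       \<and> (\<lambda>n. prob_given_state_first p n (\<sigma> n) False (\<lambda>A. B n \<le> card A)
              - prob_given_state p n (\<sigma> n) False (\<lambda>A. B n \<le> card A)) \<longlonglongrightarrow> 0"
  proof
  show "(\<lambda>n. prob_given_state_first p n (\<sigma> n) True (\<lambda>A. B n \<le> card A)
              - prob_given_state p n (\<sigma> n) True (\<lambda>A. B n \<le> card A)) \<longlonglongrightarrow> 0"
    by (rule main_w[OF hp hB heq])
  show "(\<lambda>n. prob_given_state_first p n (\<sigma> n) False (\<lambda>A. B n \<le> card A)
              - prob_given_state p n (\<sigma> n) False (\<lambda>A. B n \<le> card A)) \<longlonglongrightarrow> 0"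
    by (rule main_w[OF hp hB heq])
qed

end
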